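(* Let $s,s',t_1,t_1',t_2,t_2',u_{12},u_{1'2},u_{12'},u_{1'2'}$ be states of a pLTS such that the only transitions outgoing from $s,s',u_{12},u_{1'2},u_{12'},u_{1'2'}$ are (for one action $a$) $$s\xrightarrow{a}\tfrac12u_{12}+\tfrac12u_{1'2'},\quad s'\xrightarrow{a}\tfrac12u_{12'}+\tfrac12u_{1'2},$$ $$u_{12}\xrightarrow{a}\tfrac12t_1+\tfrac12t_2,\quad u_{1'2'}\xrightarrow{a}\tfrac12t_1'+\tfrac12t_2',\quad u_{12'}\xrightarrow{a}\tfrac12t_1+\tfrac12t_2',\quad u_{1'2}\xrightarrow{a}\tfrac12t_1'+\tfrac12t_2.$$ Then $s\sim s'$ if and only if $t_1\sim t_1'$ or $t_2\sim t_2'$.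
   Context: A distribution on a countable set $A$ is $d\colon A\to[0,1]\cap\mathbb{Q}$ summing to $1$; the notation $\tfrac12 u+\tfrac12 v$ denotes the distribution giving total probability $\tfrac12$ to each of $u,v$ (probability $1$ to $u$ if $u=v$). A pLTS is $(S,\Sigma,\to)$ with countable $S$, finite $\Sigma$, image-finite $\to\subseteq S\times\Sigma\times\mathcal{D}(S)$. Bisimilarity $\sim$ is the largest equivalence $R$ on $S$ such that $s\,R\,t$ implies every $s\xrightarrow{a}d$ is matched by some $t\xrightarrow{a}d'$ with $d(E)=d'(E)$ for every $R$-class $E$. *)

theory Defs
  imports "HOL-Analysis.Analysis"
begin

definition is_dist :: "('s::countable \<Rightarrow> real) \<Rightarrow> bool" where
  "is_dist d \<longleftrightarrow> (\<forall>x. d x \<in> \<rat> \<and> 0 \<le> d x \<and> d x \<le> 1) \<and> (d has_sum 1) UNIV"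

definition mass :: "('s \<Rightarrow> real) \<Rightarrow> 's set \<Rightarrow> real" where
  "mass d E = infsum d E"

text \<open>The distribution giving total probability 1/2 to each of u, v (probability 1 to u if u = v).\<close>
definition half :: "'s \<Rightarrow> 's \<Rightarrow> 's \<Rightarrow> real" where
  "half u v = (\<lambda>x. (if x = u then 1/2 else 0) + (if x = v then 1/2 else 0))"

definition is_pLTS :: "('s::countable \<times> 'a::finite \<times> ('s \<Rightarrow> real)) set \<Rightarrow> bool" where
  "is_pLTS T \<longleftrightarrow> (\<forall>(s, a, d) \<in> T. is_dist d) \<and> (\<forall>s. finite {(a, d). (s, a, d) \<in> T})"

definition prob_bisim :: "('s \<times> 'a \<times> ('s \<Rightarrow> real)) set \<Rightarrow> ('s \<times> 's) set \<Rightarrow> bool" where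
  "prob_bisim T R \<longleftrightarrow> equiv UNIV R \<and>
     (\<forall>(s, t) \<in> R. \<forall>a d. (s, a, d) \<in> T \<longrightarrow>
        (\<exists>d'. (t, a, d') \<in> T \<and> (\<forall>E \<in> UNIV // R. mass d E = mass d' E)))"

text \<open>Bisimilarity: membership in the largest such equivalence, i.e. in some such equivalence.\<close>
definition bisimilar :: "('s \<times> 'a \<times> ('s \<Rightarrow> real)) set \<Rightarrow> 's \<Rightarrow> 's \<Rightarrow> bool" where
  "bisimilar T s t \<longleftrightarrow> (\<exists>R. prob_bisim T R \<and> (s, t) \<in> R)"

end

theory Submission
  imports Defs
begin

lemma mass_half: "mass (half u v) E = (if u\<in>E then 1/2 else 0) + (if v\<in>E then 1/2 else 0)"
proof -
  have "mass (half u v) E = infsum (half u v) (E \<inter> {u,v})"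
    unfolding mass_def by (rule infsum_cong_neutral) (auto simp: half_def)
  also have "\<dots> = sum (half u v) (E \<inter> {u,v})" by simp
  also have "\<dots> = (if u\<in>E then 1/2 else 0) + (if v\<in>E then 1/2 else 0)"
    by (cases "u = v"; cases "u \<in> E"; cases "v \<in> E") (auto simp: half_def insert_Diff_if)
  finally show ?thesis .
qed

lemma infsum_Union_disj:
  fixes f :: "'s \<Rightarrow> real"
  assumes "f summable_on UNIV" and "\<forall>X\<in>A. \<forall>Y\<in>A. X\<noteq>Y \<longrightarrow> X\<inter>Y={}"
  shows "infsum f (\<Union>A) = infsum (\<lambda>E. infsum f E) A"
proof -
  have inj: "inj_on snd (Sigma A (\<lambda>E. E))" using assms(2) by (auto simp: inj_on_def)
  have im: "snd ` Sigma A (\<lambda>E. E) = \<Union>A" by force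
  have sf: "f summable_on \<Union>A" using assms(1) summable_on_subset_banach by blast
  have "(f \<circ> snd) summable_on Sigma A (\<lambda>E. E)" by (metis summable_on_reindex[OF inj] sf im)
  hence "infsum (\<lambda>E. infsum (\<lambda>y. (f\<circ>snd) (E,y)) E) A = infsum (f\<circ>snd) (Sigma A (\<lambda>E. E))"
    by (rule infsum_Sigma_banach)
  also have "\<dots> = infsum f (\<Union>A)" using infsum_reindex[OF inj, of f] im by simp
  finally show ?thesis by simp
qed

lemma class_mem:
  assumes "equiv UNIV R" "E \<in> UNIV // R" "(x,y) \<in> R"
  shows "x \<in> E \<longleftrightarrow> y \<in> E"
  using assms unfolding quotient_def equiv_def by (auto dest: symD transD)

lemma coarsen:
  fixes d d' :: "'s \<Rightarrow> real"
  assumes eR: "equiv UNIV R" and eR': "equiv UNIV R'" and sub: "R \<subseteq> R'"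
    and sd: "d summable_on UNIV" and sd': "d' summable_on UNIV"
    and m: "\<forall>E\<in>UNIV//R. mass d E = mass d' E"
    and E': "E' \<in> UNIV//R'"
  shows "mass d E' = mass d' E'"
proof -
  define A where "A = {E\<in>UNIV//R. E\<subseteq>E'}"
  have U: "\<Union>A = E'"
  proof
    show "\<Union>A \<subseteq> E'" unfolding A_def by auto
    show "E' \<subseteq> \<Union>A"
    proof
      fix x assume x: "x \<in> E'"
      have "R``{x} \<in> UNIV//R" by (rule quotientI) simp
      moreover have "R``{x} \<subseteq> E'" using class_mem[OF eR' E'] sub x by auto
      moreover have "x \<in> R``{x}" using eR unfolding equiv_def refl_on_def by auto
      ultimately show "x \<in> \<Union>A" unfolding A_def by blast
    qed
  qed
  have dj: "\<forall>X\<in>A. \<forall>Y\<in>A. X\<noteq>Y \<longrightarrow> X\<inter>Y={}"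
    unfolding A_def using quotient_disj[OF eR] by blast
  have "mass d E' = infsum (\<lambda>E. infsum d E) A"
    unfolding mass_def using infsum_Union_disj[OF sd dj] U by simp
  also have "\<dots> = infsum (\<lambda>E. infsum d' E) A"
  proof (rule infsum_cong)
    fix E assume "E \<in> A" then show "infsum d E = infsum d' E" using m unfolding A_def mass_def by auto
  qed
  also have "\<dots> = mass d' E'"
    unfolding mass_def using infsum_Union_disj[OF sd' dj] U by simp
  finally show ?thesis .
qed

lemma extend:
  assumes pl: "is_pLTS T" and R: "prob_bisim T R"
    and G: "\<forall>(x,y)\<in>G \<union> G\<inverse>. \<forall>b d. (x,b,d)\<in>T \<longrightarrow>
       (\<exists>d'. (y,b,d')\<in>T \<and> (\<forall>E\<in>UNIV//((R\<union>G\<union>G\<inverse>)\<^sup>*). mass d E = mass d' E))"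
  shows "prob_bisim T ((R\<union>G\<union>G\<inverse>)\<^sup>*)"
proof -
  define R' where "R' = (R\<union>G\<union>G\<inverse>)\<^sup>*"
  have eR: "equiv UNIV R" using R unfolding prob_bisim_def by simp
  have symX: "sym (R\<union>G\<union>G\<inverse>)" using eR unfolding equiv_def sym_def by blast
  have eR': "equiv UNIV R'" unfolding R'_def equiv_def
    using sym_rtrancl[OF symX] by (auto simp: refl_on_def trans_def)
  have sub: "R \<subseteq> R'" unfolding R'_def by auto
  define P where "P = {(x,y). \<forall>b d. (x,b,d)\<in>T \<longrightarrow>
       (\<exists>d'. (y,b,d')\<in>T \<and> (\<forall>E\<in>UNIV//R'. mass d E = mass d' E))}"
  have Ptrans: "(x,z) \<in> P" if "(x,y)\<in>P" "(y,z)\<in>P" for x y z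
    using that unfolding P_def by (auto) (metis)
  have Prefl: "(x,x)\<in>P" for x unfolding P_def by auto
  have dist: "(x,b,d)\<in>T \<Longrightarrow> d summable_on UNIV" for x b d
    using pl unfolding is_pLTS_def is_dist_def by (auto simp: summable_on_def)
  have XP: "(x,y) \<in> P" if "(x,y) \<in> R\<union>G\<union>G\<inverse>" for x y
  proof (cases "(x,y) \<in> R")
    case True
    show ?thesis unfolding P_def
    proof (intro CollectI case_prodI allI impI)
      fix b d assume t: "(x,b,d)\<in>T"
      then obtain d' where t': "(y,b,d')\<in>T" and m: "\<forall>E\<in>UNIV//R. mass d E = mass d' E"
        using R True unfolding prob_bisim_def by blast
      show "\<exists>d'. (y,b,d')\<in>T \<and> (\<forall>E\<in>UNIV//R'. mass d E = mass d' E)"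
        using coarsen[OF eR eR' sub dist[OF t] dist[OF t'] m] t' by blast
    qed
  next
    case False
    then have "(x,y) \<in> G \<union> G\<inverse>" using that by blast
    then show ?thesis using G unfolding P_def R'_def by blast
  qed
  have "R' \<subseteq> P"
  proof
    fix p assume "p \<in> R'"
    then obtain x z where p: "p = (x,z)" and xz: "(x,z) \<in> (R\<union>G\<union>G\<inverse>)\<^sup>*" unfolding R'_def
      by (cases p) auto
    from xz have "(x,z) \<in> P"
    proof (induction rule: rtrancl_induct)
      case base then show ?case by (rule Prefl)
    next
      case (step y z) then show ?case using Ptrans XP by blast
    qed
    then show "p \<in> P" using p by simp
  qed
  then show ?thesis using eR' unfolding prob_bisim_def P_def R'_def by blast
qed



lemma eqv_cl:
  assumes "equiv UNIV R" shows "equiv UNIV ((R\<union>G\<union>G\<inverse>)\<^sup>*)"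
proof -
  have symX: "sym (R\<union>G\<union>G\<inverse>)" using assms unfolding equiv_def sym_def by blast
  show ?thesis unfolding equiv_def
    using sym_rtrancl[OF symX] by (auto simp: refl_on_def trans_def)
qed

lemma pair_ok:
  assumes e: "equiv UNIV R'"
    and hx: "\<And>b d. (x,b,d)\<in>T \<longleftrightarrow> b=a \<and> d = half p q"
    and hy: "\<And>b d. (y,b,d)\<in>T \<longleftrightarrow> b=a \<and> d = half p' q'"
    and r: "((p,p')\<in>R' \<and> (q,q')\<in>R') \<or> ((p,q')\<in>R' \<and> (q,p')\<in>R')"
  shows "\<forall>b d. (x,b,d)\<in>T \<longrightarrow> (\<exists>d'. (y,b,d')\<in>T \<and> (\<forall>E\<in>UNIV//R'. mass d E = mass d' E))"
proof (intro allI impI)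
  fix b d assume "(x,b,d)\<in>T"
  then have bd: "b = a" "d = half p q" using hx by auto
  have "\<forall>E\<in>UNIV//R'. mass d E = mass (half p' q') E"
  proof
    fix E assume E: "E \<in> UNIV//R'"
    show "mass d E = mass (half p' q') E"
      unfolding bd mass_half using r class_mem[OF e E] by auto
  qed
  then show "\<exists>d'. (y,b,d')\<in>T \<and> (\<forall>E\<in>UNIV//R'. mass d E = mass d' E)"
    using hy bd by blast
qed

theorem mainTheorem11:
  fixes T :: "('s::countable \<times> 'a::finite \<times> ('s \<Rightarrow> real)) set"
    and a :: 'a
    and s s' t1 t1' t2 t2' u12 u1'2 u12' u1'2' :: 's
  assumes "is_pLTS T"
    and "\<And>b d. (s, b, d) \<in> T \<longleftrightarrow> b = a \<and> d = half u12 u1'2'"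
    and "\<And>b d. (s', b, d) \<in> T \<longleftrightarrow> b = a \<and> d = half u12' u1'2"
    and "\<And>b d. (u12, b, d) \<in> T \<longleftrightarrow> b = a \<and> d = half t1 t2"
    and "\<And>b d. (u1'2', b, d) \<in> T \<longleftrightarrow> b = a \<and> d = half t1' t2'"
    and "\<And>b d. (u12', b, d) \<in> T \<longleftrightarrow> b = a \<and> d = half t1 t2'"
    and "\<And>b d. (u1'2, b, d) \<in> T \<longleftrightarrow> b = a \<and> d = half t1' t2"
  shows "bisimilar T s s' \<longleftrightarrow> bisimilar T t1 t1' \<or> bisimilar T t2 t2'"


proof
  assume "bisimilar T s s'"
  then obtain R where R: "prob_bisim T R" and ss: "(s,s')\<in>R" unfolding bisimilar_def by blast
  have eR: "equiv UNIV R" using R unfolding prob_bisim_def by simp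
  have tr: "\<exists>d'. (y,b,d')\<in>T \<and> (\<forall>E\<in>UNIV//R. mass d E = mass d' E)"
    if "(x,y)\<in>R" "(x,b,d)\<in>T" for x y b d using R that unfolding prob_bisim_def by blast
  have cl: "R``{z} \<in> UNIV//R" for z by (rule quotientI) simp
  have rf: "z \<in> R``{z}" for z using eR unfolding equiv_def refl_on_def by auto
  obtain d' where d': "(s',a,d')\<in>T" and m: "\<forall>E\<in>UNIV//R. mass (half u12 u1'2') E = mass d' E"
    using tr[OF ss, of a "half u12 u1'2'"] assms(2) by blast
  have d'e: "d' = half u12' u1'2" using d' assms(3) by blast
  have "mass (half u12 u1'2') (R``{u12}) = mass d' (R``{u12})" using m cl by blast
  then have "u12' \<in> R``{u12} \<or> u1'2 \<in> R``{u12}" unfolding d'e mass_half using rf[of u12]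
    by (auto split: if_splits)
  then show "bisimilar T t1 t1' \<or> bisimilar T t2 t2'"
  proof
    assume "u1'2 \<in> R``{u12}"
    then have uu: "(u12,u1'2)\<in>R" by simp
    obtain e' where e': "(u1'2,a,e')\<in>T" and m: "\<forall>E\<in>UNIV//R. mass (half t1 t2) E = mass e' E"
      using tr[OF uu, of a "half t1 t2"] assms(4) by blast
    have e'e: "e' = half t1' t2" using e' assms(7) by blast
    have "mass (half t1 t2) (R``{t1}) = mass e' (R``{t1})" using m cl by blast
    then have "t1' \<in> R``{t1}" unfolding e'e mass_half using rf[of t1] by (auto split: if_splits)
    then show ?thesis using R unfolding bisimilar_def by auto
  next
    assume "u12' \<in> R``{u12}"
    then have uu: "(u12,u12')\<in>R" by simp
    obtain e' where e': "(u12',a,e')\<in>T" and m: "\<forall>E\<in>UNIV//R. mass (half t1 t2) E = mass e' E"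
      using tr[OF uu, of a "half t1 t2"] assms(4) by blast
    have e'e: "e' = half t1 t2'" using e' assms(6) by blast
    have "mass (half t1 t2) (R``{t2}) = mass e' (R``{t2})" using m cl by blast
    then have "t2' \<in> R``{t2}" unfolding e'e mass_half using rf[of t2] by (auto split: if_splits)
    then show ?thesis using R unfolding bisimilar_def by auto
  qed
next
  assume "bisimilar T t1 t1' \<or> bisimilar T t2 t2'"
  then show "bisimilar T s s'"
  proof
    assume "bisimilar T t1 t1'"
    then obtain R where R: "prob_bisim T R" and tt: "(t1,t1')\<in>R" unfolding bisimilar_def by blast
    have eR: "equiv UNIV R" using R unfolding prob_bisim_def by simp
    define G where "G = {(u12,u1'2),(u12',u1'2'),(s,s')}"
    define R' where "R' = (R\<union>G\<union>G\<inverse>)\<^sup>*"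
    have e: "equiv UNIV R'" unfolding R'_def by (rule eqv_cl[OF eR])
    have inR: "(x,y)\<in>R'" if "(x,y)\<in>R \<or> (x,y)\<in>G \<or> (y,x)\<in>G" for x y
      using that unfolding R'_def by blast
    have rfl: "(x,x)\<in>R'" for x using e unfolding equiv_def refl_on_def by auto
    have sy: "(y,x)\<in>R'" if "(x,y)\<in>R'" for x y using e that unfolding equiv_def sym_def by blast
    have G: "\<forall>(x,y)\<in>G \<union> G\<inverse>. \<forall>b d. (x,b,d)\<in>T \<longrightarrow>
       (\<exists>d'. (y,b,d')\<in>T \<and> (\<forall>E\<in>UNIV//R'. mass d E = mass d' E))"
      unfolding G_def
      using pair_ok[OF e assms(4) assms(7)] pair_ok[OF e assms(7) assms(4)]
        pair_ok[OF e assms(6) assms(5)] pair_ok[OF e assms(5) assms(6)]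
        pair_ok[OF e assms(2) assms(3)] pair_ok[OF e assms(3) assms(2)]
        inR[of t1 t1'] sy[OF inR[of t1 t1']] inR[of u12 u1'2] sy[OF inR[of u12 u1'2]]
        inR[of u12' u1'2'] sy[OF inR[of u12' u1'2']] tt rfl
      unfolding G_def by auto
    have "prob_bisim T R'" using extend[OF assms(1) R, of G] G unfolding R'_def by blast
    moreover have "(s,s')\<in>R'" using inR unfolding G_def by blast
    ultimately show ?thesis unfolding bisimilar_def by blast
  next
    assume "bisimilar T t2 t2'"
    then obtain R where R: "prob_bisim T R" and tt: "(t2,t2')\<in>R" unfolding bisimilar_def by blast
    have eR: "equiv UNIV R" using R unfolding prob_bisim_def by simp
    define G where "G = {(u12,u12'),(u1'2',u1'2),(s,s')}"
    define R' where "R' = (R\<union>G\<union>G\<inverse>)\<^sup>*"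
    have e: "equiv UNIV R'" unfolding R'_def by (rule eqv_cl[OF eR])
    have inR: "(x,y)\<in>R'" if "(x,y)\<in>R \<or> (x,y)\<in>G \<or> (y,x)\<in>G" for x y
      using that unfolding R'_def by blast
    have rfl: "(x,x)\<in>R'" for x using e unfolding equiv_def refl_on_def by auto
    have sy: "(y,x)\<in>R'" if "(x,y)\<in>R'" for x y using e that unfolding equiv_def sym_def by blast
    have G: "\<forall>(x,y)\<in>G \<union> G\<inverse>. \<forall>b d. (x,b,d)\<in>T \<longrightarrow>
       (\<exists>d'. (y,b,d')\<in>T \<and> (\<forall>E\<in>UNIV//R'. mass d E = mass d' E))"
      unfolding G_def
      using pair_ok[OF e assms(4) assms(6)] pair_ok[OF e assms(6) assms(4)]
        pair_ok[OF e assms(5) assms(7)] pair_ok[OF e assms(7) assms(5)]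
        pair_ok[OF e assms(2) assms(3)] pair_ok[OF e assms(3) assms(2)]
        inR[of t2 t2'] sy[OF inR[of t2 t2']] inR[of u12 u12'] sy[OF inR[of u12 u12']]
        inR[of u1'2' u1'2] sy[OF inR[of u1'2' u1'2]] tt rfl
      unfolding G_def by auto
    have "prob_bisim T R'" using extend[OF assms(1) R, of G] G unfolding R'_def by blast
    moreover have "(s,s')\<in>R'" using inR unfolding G_def by blast
    ultimately show ?thesis unfolding bisimilar_def by blast
  qed
qed

end
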